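(* Let $x$ be an element of a commutative ring $R$, $U$ a variable, $M$ an $R$-module and $\hat{M}^{xR}=\varprojlim_n M/x^nM$ its $xR$-adic completion. Then: (a) $H_0(x-U;M[[U]])\cong M[[U]]/(x-U)M[[U]]$, and the map $\sum_{i\ge0}m_iU^i\mapsto\big(\sum_{i<n}x^im_i+x^nM\big)_{n}$ induces an epimorphism $M[[U]]/(x-U)M[[U]]\twoheadrightarrow\hat{M}^{xR}$. (b) $H_1(x-U;M[[U]])\cong\ker\big(\operatorname{Hom}_R(R_x,M)\to M\big)$, where the map sends $\varphi$ to $\varphi(1)$. (c) If $M$ is of bounded $xR$-torsion, then $H_1(x-U;M[[U]])=0$ and $H_0(x-U;M[[U]])\cong\hat{M}^{xR}$ (via the map in (a)).
   Context: $M[[U]]$ is the module of formal power series over $M$, an $R[U]$-module; $H_i(x-U;M[[U]])$ denotes the homology of the Koszul complex $0\to M[[U]]\xrightarrow{x-U}M[[U]]\to0$ (homological degrees $1,0$). $M$ is of bounded $xR$-torsion if there is $k$ with $0:_Mx^k=0:_Mx^{k+j}$ for all $j\ge0$. *)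

theory Defs
  imports Main "HOL.Modules"
begin

text \<open>Formal power series M[[U]] are functions nat => 'm
(coefficient sequences).\<close>

text \<open>The Koszul differential: multiplication by x - U on M[[U]].\<close>
definition koszul_d :: "('r::comm_ring_1 \<Rightarrow> 'm::ab_group_add \<Rightarrow> 'm) \<Rightarrow> 'r \<Rightarrow> (nat \<Rightarrow> 'm) \<Rightarrow> (nat \<Rightarrow> 'm)" where
  "koszul_d sc x g = (\<lambda>i. sc x (g i) - (if i = 0 then 0 else g (i - 1)))"

definition H1 :: "('r::comm_ring_1 \<Rightarrow> 'm::ab_group_add \<Rightarrow> 'm) \<Rightarrow> 'r \<Rightarrow> (nat \<Rightarrow> 'm) set" where
  "H1 sc x = {f. koszul_d sc x f = (\<lambda>_. 0)}"

text \<open>(x-U)M[[U]], the image of x - U; H_0 = M[[U]] / this submodule.\<close>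
definition Bd :: "('r::comm_ring_1 \<Rightarrow> 'm::ab_group_add \<Rightarrow> 'm) \<Rightarrow> 'r \<Rightarrow> (nat \<Rightarrow> 'm) set" where
  "Bd sc x = range (koszul_d sc x)"

definition xpowM :: "('r::comm_ring_1 \<Rightarrow> 'm::ab_group_add \<Rightarrow> 'm) \<Rightarrow> 'r \<Rightarrow> nat \<Rightarrow> 'm set" where
  "xpowM sc x n = range (sc (x ^ n))"

text \<open>xR-adic completion: elements of lim_n M/x^nM are represented by sequences c with
c n a representative in M/x^n M; compatibility c (n+1) = c n mod x^n M; two representatives
give the same element iff c n - c' n lies in x^n M for all n.\<close>
definition compl_seqs :: "('r::comm_ring_1 \<Rightarrow> 'm::ab_group_add \<Rightarrow> 'm) \<Rightarrow> 'r \<Rightarrow> (nat \<Rightarrow> 'm) set" where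
  "compl_seqs sc x = {c. \<forall>n. c (Suc n) - c n \<in> xpowM sc x n}"

definition compl_eq :: "('r::comm_ring_1 \<Rightarrow> 'm::ab_group_add \<Rightarrow> 'm) \<Rightarrow> 'r \<Rightarrow> (nat \<Rightarrow> 'm) \<Rightarrow> (nat \<Rightarrow> 'm) \<Rightarrow> bool" where
  "compl_eq sc x c c' \<longleftrightarrow> (\<forall>n. c n - c' n \<in> xpowM sc x n)"

definition Phi :: "('r::comm_ring_1 \<Rightarrow> 'm::ab_group_add \<Rightarrow> 'm) \<Rightarrow> 'r \<Rightarrow> (nat \<Rightarrow> 'm) \<Rightarrow> (nat \<Rightarrow> 'm)" where
  "Phi sc x f = (\<lambda>n. \<Sum>i<n. sc (x ^ i) (f i))"

text \<open>Localization R_x: classes of pairs (a,n) standing for a/x^n.\<close>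
definition loc_rel :: "'r::comm_ring_1 \<Rightarrow> (('r \<times> nat) \<times> ('r \<times> nat)) set" where
  "loc_rel x = {((a,n),(b,m)). \<exists>k. x ^ k * (x ^ m * a - x ^ n * b) = 0}"

definition loc_cls :: "'r::comm_ring_1 \<Rightarrow> 'r \<Rightarrow> nat \<Rightarrow> ('r \<times> nat) set" where
  "loc_cls x a n = loc_rel x `` {(a,n)}"

definition Loc :: "'r::comm_ring_1 \<Rightarrow> ('r \<times> nat) set set" where
  "Loc x = UNIV // loc_rel x"

text \<open>Hom_R(R_x, M): R-linear maps on R_x (extensional: 0 outside R_x).
Addition in R_x: a/x^n + b/x^m = (a x^m + b x^n)/x^(n+m); R-action r(a/x^n) = (ra)/x^n.\<close>
definition HomLoc :: "('r::comm_ring_1 \<Rightarrow> 'm::ab_group_add \<Rightarrow> 'm) \<Rightarrow> 'r \<Rightarrow> (('r \<times> nat) set \<Rightarrow> 'm) set" where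
  "HomLoc sc x = {\<phi>. (\<forall>P. P \<notin> Loc x \<longrightarrow> \<phi> P = 0)
     \<and> (\<forall>a n b m. \<phi> (loc_cls x (a * x ^ m + b * x ^ n) (n + m)) = \<phi> (loc_cls x a n) + \<phi> (loc_cls x b m))
     \<and> (\<forall>r a n. \<phi> (loc_cls x (r * a) n) = sc r (\<phi> (loc_cls x a n)))}"

definition KerEv :: "('r::comm_ring_1 \<Rightarrow> 'm::ab_group_add \<Rightarrow> 'm) \<Rightarrow> 'r \<Rightarrow> (('r \<times> nat) set \<Rightarrow> 'm) set" where
  "KerEv sc x = {\<phi> \<in> HomLoc sc x. \<phi> (loc_cls x 1 0) = 0}"

definition bounded_torsion :: "('r::comm_ring_1 \<Rightarrow> 'm::ab_group_add \<Rightarrow> 'm) \<Rightarrow> 'r \<Rightarrow> bool" where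
  "bounded_torsion sc x \<longleftrightarrow> (\<exists>k. \<forall>j. {m. sc (x ^ k) m = 0} = {m. sc (x ^ (k + j)) m = 0})"

end

theory Submission
  imports Defs
begin

context module
begin

lemma Phi_compl: "Phi scale x f \<in> compl_seqs scale x"
  by (simp add: compl_seqs_def Phi_def xpowM_def)

lemma Phi_add: "Phi scale x (\<lambda>i. f i + g i) = (\<lambda>n. Phi scale x f n + Phi scale x g n)"
  by (simp add: Phi_def scale_right_distrib sum.distrib)

lemma Phi_diff: "Phi scale x (\<lambda>i. f i - g i) = (\<lambda>n. Phi scale x f n - Phi scale x g n)"
  by (simp add: Phi_def scale_right_diff_distrib sum_subtractf)

lemma Phi_scale: "Phi scale x (\<lambda>i. r *s f i) = (\<lambda>n. r *s Phi scale x f n)"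
  by (simp add: Phi_def scale_sum_right mult.commute)

lemma Phi_koszul: "Phi scale x (koszul_d scale x h) n = (x ^ n) *s (if n = 0 then 0 else h (n - 1))"
proof (induction n)
  case 0 then show ?case by (simp add: Phi_def)
next
  case (Suc n)
  have "Phi scale x (koszul_d scale x h) (Suc n) = Phi scale x (koszul_d scale x h) n + (x^n) *s koszul_d scale x h n"
    by (simp add: Phi_def)
  also have "\<dots> = (x ^ Suc n) *s h n"
    using Suc by (cases n) (auto simp: koszul_d_def scale_right_diff_distrib mult.commute)
  finally show ?case by simp
qed

lemma Phi_Bd: assumes "(\<lambda>i. f i - g i) \<in> Bd scale x"
  shows "compl_eq scale x (Phi scale x f) (Phi scale x g)"
proof -
  obtain h where h: "(\<lambda>i. f i - g i) = koszul_d scale x h" using assms by (auto simp: Bd_def)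
  show ?thesis unfolding compl_eq_def
  proof
    fix n
    have "Phi scale x f n - Phi scale x g n = Phi scale x (koszul_d scale x h) n"
      by (simp add: Phi_diff flip: h)
    then show "Phi scale x f n - Phi scale x g n \<in> xpowM scale x n"
      by (simp add: Phi_koszul xpowM_def)
  qed
qed

lemma Phi_surj: assumes "c \<in> compl_seqs scale x"
  shows "\<exists>f. compl_eq scale x (Phi scale x f) c"
proof -
  have "\<forall>n. \<exists>y. c (Suc n) - c n = (x^n) *s y" using assms by (auto simp: compl_seqs_def xpowM_def)
  then obtain y where y: "\<And>n. c (Suc n) - c n = (x^n) *s y n" by metis
  define f where "f = (\<lambda>n. if n = 0 then c 1 else y n)"
  have P: "Phi scale x f (Suc n) = c (Suc n)" for n
  proof (induction n)
    case 0 then show ?case by (simp add: Phi_def f_def)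
  next
    case (Suc n)
    have "Phi scale x f (Suc (Suc n)) = Phi scale x f (Suc n) + (x ^ Suc n) *s y (Suc n)"
      by (simp add: Phi_def f_def)
    then show ?case using Suc y[of "Suc n"] by (simp add: algebra_simps)
  qed
  have "compl_eq scale x (Phi scale x f) c"
    unfolding compl_eq_def
  proof
    fix n show "Phi scale x f n - c n \<in> xpowM scale x n"
    proof (cases n)
      case 0 then show ?thesis by (simp add: xpowM_def)
    next
      case (Suc m) then show ?thesis using P[of m] by (simp add: xpowM_def) (metis scale_zero_right rangeI)
    qed
  qed
  then show ?thesis by blast
qed

definition gseq :: "(nat \<Rightarrow> 'b) \<Rightarrow> nat \<Rightarrow> 'b" where
  "gseq f n = (if n = 0 then 0 else f (n - 1))"

definition Psi :: "'a \<Rightarrow> (nat \<Rightarrow> 'b) \<Rightarrow> ('a \<times> nat) set \<Rightarrow> 'b" where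
  "Psi x f P = (if P \<in> Loc x then (let p = SOME p. p \<in> P in fst p *s gseq f (snd p)) else 0)"

lemma H1_step: assumes "f \<in> H1 scale x" shows "x *s gseq f (Suc n) = gseq f n"
proof -
  have "koszul_d scale x f n = 0" using assms by (simp add: H1_def)
  then show ?thesis by (simp add: koszul_d_def gseq_def)
qed

lemma H1_pow: assumes "f \<in> H1 scale x" shows "(x ^ j) *s gseq f (n + j) = gseq f n"
proof (induction j)
  case 0 then show ?case by simp
next
  case (Suc j)
  have "(x ^ Suc j) *s gseq f (n + Suc j) = (x ^ j) *s (x *s gseq f (Suc (n + j)))"
    by (simp add: mult.commute)
  also have "\<dots> = gseq f n" using H1_step[OF assms] Suc by simp
  finally show ?case .
qed

lemma val_wd: assumes "f \<in> H1 scale x" and "((a,n),(b,m)) \<in> loc_rel x"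
  shows "a *s gseq f n = b *s gseq f m"
proof -
  obtain k where k: "x ^ k * (x ^ m * a - x ^ n * b) = 0" using assms(2) by (auto simp: loc_rel_def)
  have e: "x ^ k * x ^ m * a = x ^ k * x ^ n * b" using k by (simp add: algebra_simps)
  have "a *s gseq f n = a *s ((x ^ (m + k)) *s gseq f (n + (m + k)))" using H1_pow[OF assms(1)] by simp
  also have "\<dots> = (x ^ k * x ^ m * a) *s gseq f (n + m + k)"
    by (simp add: power_add ac_simps)
  also have "\<dots> = (x ^ k * x ^ n * b) *s gseq f (m + (n + k))" using e by (simp add: ac_simps)
  also have "\<dots> = b *s ((x ^ (n + k)) *s gseq f (m + (n + k)))" by (simp add: power_add ac_simps)
  also have "\<dots> = b *s gseq f m" using H1_pow[OF assms(1)] by simp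
  finally show ?thesis .
qed

lemma cls_in_Loc: "loc_cls x a n \<in> Loc x"
  by (simp add: loc_cls_def Loc_def quotientI)

lemma cls_self: "(a,n) \<in> loc_cls x a n"
  by (simp add: loc_cls_def loc_rel_def)

lemma Loc_cls: "P \<in> Loc x \<Longrightarrow> \<exists>a n. P = loc_cls x a n"
  by (auto simp: Loc_def loc_cls_def quotient_def)

lemma Psi_cls: assumes "f \<in> H1 scale x" shows "Psi x f (loc_cls x a n) = a *s gseq f n"
proof -
  let ?p = "SOME p. p \<in> loc_cls x a n"
  have "?p \<in> loc_cls x a n" using cls_self by (rule someI)
  then have "((a,n), ?p) \<in> loc_rel x" by (simp add: loc_cls_def)
  then have "fst ?p *s gseq f (snd ?p) = a *s gseq f n"
    using val_wd[OF assms, of a n "fst ?p" "snd ?p"] by simp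
  then show ?thesis by (simp add: Psi_def cls_in_Loc Let_def)
qed

lemma loc_equiv: "equiv UNIV (loc_rel x)"
proof (rule equivI)
  show "refl (loc_rel x)" by (auto simp: refl_on_def loc_rel_def intro: exI[of _ 0])
  show "sym (loc_rel x)"
  proof (rule symI)
    fix p q assume "(p,q) \<in> loc_rel x"
    then obtain a n b m k where pq: "p = (a,n)" "q = (b,m)" "x ^ k * (x ^ m * a - x ^ n * b) = 0"
      by (auto simp: loc_rel_def)
    then have "x ^ k * (x ^ n * b - x ^ m * a) = 0" by (simp add: algebra_simps)
    then show "(q,p) \<in> loc_rel x" using pq by (auto simp: loc_rel_def)
  qed
  show "trans (loc_rel x)"
  proof (rule transI)
    fix p q r assume "(p,q) \<in> loc_rel x" "(q,r) \<in> loc_rel x"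
    then obtain a n b m c l k j where pq: "p = (a,n)" "q = (b,m)" "r = (c,l)"
      "x ^ k * (x ^ m * a - x ^ n * b) = 0" "x ^ j * (x ^ l * b - x ^ m * c) = 0"
      by (auto simp: loc_rel_def)
    have "x ^ (k + j + m) * (x ^ l * a - x ^ n * c)
      = x ^ j * x ^ l * (x ^ k * (x ^ m * a - x ^ n * b)) + x ^ k * x ^ n * (x ^ j * (x ^ l * b - x ^ m * c))"
      by (simp add: power_add algebra_simps)
    also have "\<dots> = 0" using pq by simp
    finally show "(p,r) \<in> loc_rel x" using pq by (auto simp: loc_rel_def)
  qed
qed (simp)

lemma cls_eq: "((a,n),(b,m)) \<in> loc_rel x \<Longrightarrow> loc_cls x a n = loc_cls x b m"
  unfolding loc_cls_def using loc_equiv by (rule equiv_class_eq)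

lemma Psi_Hom: assumes "f \<in> H1 scale x" shows "Psi x f \<in> KerEv scale x"
proof -
  have "Psi x f \<in> HomLoc scale x"
    unfolding HomLoc_def
  proof (intro CollectI conjI allI impI)
    fix P assume "P \<notin> Loc x" then show "Psi x f P = 0" by (simp add: Psi_def)
  next
    fix a n b m
    show "Psi x f (loc_cls x (a * x ^ m + b * x ^ n) (n + m)) = Psi x f (loc_cls x a n) + Psi x f (loc_cls x b m)"
      using H1_pow[OF assms, of m n] H1_pow[OF assms, of n m]
      by (simp add: Psi_cls[OF assms] scale_left_distrib ac_simps flip: scale_scale)
  next
    fix r a n show "Psi x f (loc_cls x (r * a) n) = r *s Psi x f (loc_cls x a n)"
      by (simp add: Psi_cls[OF assms])
  qed
  moreover have "Psi x f (loc_cls x 1 0) = 0" by (simp add: Psi_cls[OF assms] gseq_def)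
  ultimately show ?thesis by (simp add: KerEv_def)
qed

lemma Psi_inj: "inj_on (Psi x) (H1 scale x)"
proof (rule inj_onI)
  fix f g assume f: "f \<in> H1 scale x" and g: "g \<in> H1 scale x" and e: "Psi x f = Psi x g"
  show "f = g"
  proof
    fix n
    have "Psi x f (loc_cls x 1 (Suc n)) = Psi x g (loc_cls x 1 (Suc n))" using e by simp
    then show "f n = g n" by (simp add: Psi_cls f g gseq_def)
  qed
qed

lemma Psi_surj: assumes "\<phi> \<in> KerEv scale x" shows "\<phi> \<in> Psi x ` H1 scale x"
proof -
  have hom: "\<phi> \<in> HomLoc scale x" and ker: "\<phi> (loc_cls x 1 0) = 0" using assms by (auto simp: KerEv_def)
  have z: "\<And>P. P \<notin> Loc x \<Longrightarrow> \<phi> P = 0"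
    and sc: "\<And>r a n. \<phi> (loc_cls x (r * a) n) = r *s \<phi> (loc_cls x a n)"
    using hom by (auto simp: HomLoc_def)
  define f where "f = (\<lambda>n. \<phi> (loc_cls x 1 (Suc n)))"
  have shift: "x *s \<phi> (loc_cls x 1 (Suc n)) = \<phi> (loc_cls x 1 n)" for n
  proof -
    have "((x * 1, Suc n), (1, n)) \<in> loc_rel x" by (auto simp: loc_rel_def intro!: exI[of _ 0])
    then have "loc_cls x (x * 1) (Suc n) = loc_cls x 1 n" by (rule cls_eq)
    then show ?thesis using sc[of x 1 "Suc n"] by simp
  qed
  have fH: "f \<in> H1 scale x"
    unfolding H1_def koszul_d_def f_def
    using shift ker by (auto intro!: ext)
  have g: "gseq f n = \<phi> (loc_cls x 1 n)" for n
    by (cases n) (auto simp: gseq_def f_def ker)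
  have "Psi x f = \<phi>"
  proof
    fix P show "Psi x f P = \<phi> P"
    proof (cases "P \<in> Loc x")
      case True
      then obtain a n where P: "P = loc_cls x a n" using Loc_cls by blast
      show ?thesis using sc[of a 1 n] by (simp add: P Psi_cls[OF fH] g)
    next
      case False then show ?thesis by (simp add: Psi_def z)
    qed
  qed
  then show ?thesis using fH by blast
qed

lemma Psi_add: "Psi x (\<lambda>i. f i + g i) = (\<lambda>P. Psi x f P + Psi x g P)"
  by (auto simp: Psi_def Let_def gseq_def scale_right_distrib intro!: ext)

lemma Psi_scale: "Psi x (\<lambda>i. r *s f i) = (\<lambda>P. r *s Psi x f P)"
  by (auto simp: Psi_def Let_def gseq_def mult.commute intro!: ext)

lemma bt_ann: assumes "bounded_torsion scale x"
  obtains k where "\<And>j m. (x ^ (k + j)) *s m = 0 \<Longrightarrow> (x ^ k) *s m = 0"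
proof -
  obtain k where k: "\<And>j. {m. (x ^ k) *s m = 0} = {m. (x ^ (k + j)) *s m = 0}"
    using assms by (auto simp: bounded_torsion_def)
  show ?thesis by (rule that[of k]) (use k in blast)
qed

lemma bt_H1: assumes "bounded_torsion scale x" shows "H1 scale x = {\<lambda>_. 0}"
proof -
  obtain k where k: "\<And>j m. (x ^ (k + j)) *s m = 0 \<Longrightarrow> (x ^ k) *s m = 0" using bt_ann[OF assms] by blast
  have "f = (\<lambda>_. 0)" if f: "f \<in> H1 scale x" for f
  proof
    fix j
    have kill: "(x ^ n) *s gseq f n = 0" for n using H1_pow[OF f, where n=0 and j=n] by (simp add: gseq_def[of f 0])
    have "(x ^ (k + (j+1))) *s gseq f (j + 1 + k) = 0" using kill[of "j+1+k"] by (simp add: ac_simps)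
    then have "(x ^ k) *s gseq f (j + 1 + k) = 0" by (rule k)
    moreover have "(x ^ k) *s gseq f (j + 1 + k) = gseq f (j+1)" by (rule H1_pow[OF f])
    ultimately show "f j = 0" by (simp add: gseq_def)
  qed
  moreover have "(\<lambda>_. 0) \<in> H1 scale x" by (simp add: H1_def koszul_d_def)
  ultimately show ?thesis by blast
qed

lemma bt_inj: assumes "bounded_torsion scale x" and ce: "compl_eq scale x (Phi scale x f) (Phi scale x g)"
  shows "(\<lambda>i. f i - g i) \<in> Bd scale x"
proof -
  obtain k where k: "\<And>j m. (x ^ (k + j)) *s m = 0 \<Longrightarrow> (x ^ k) *s m = 0" using bt_ann[OF assms(1)] by blast
  define d where "d = (\<lambda>i. f i - g i)"
  define S where "S = Phi scale x d"
  have "\<forall>n. \<exists>y. S n = (x ^ n) *s y"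
    using ce by (auto simp: compl_eq_def xpowM_def S_def d_def Phi_diff)
  then obtain z where z: "\<And>n. S n = (x ^ n) *s z n" by metis
  have Ssuc: "S (Suc n) = S n + (x ^ n) *s d n" for n by (simp add: S_def Phi_def)
  define Q where "Q = (\<lambda>n l. \<Sum>t<l. (x ^ t) *s d (n + t))"
  have Q1: "Q n (Suc l) = Q n l + (x ^ l) *s d (n + l)" for n l by (simp add: Q_def)
  have Q2: "Q n (Suc l) = d n + x *s Q (Suc n) l" for n l
    unfolding Q_def by (simp add: sum.lessThan_Suc_shift scale_sum_right del: sum.lessThan_Suc)
  have Q0: "Q 0 l = S l" for l by (simp add: Q_def S_def Phi_def)
  define H where "H = (\<lambda>n. (x ^ k) *s z (n + k) - Q n k)"
  have H0: "H 0 = 0" by (simp add: H_def Q0 z)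
  have main: "x *s H (Suc i) - H i = d i" for i
  proof -
    define w where "w = x *s z (Suc (i + k)) - z (i + k) - d (i + k)"
    have "(x ^ (k + i)) *s w = S (Suc (i + k)) - S (i + k) - (x ^ (i + k)) *s d (i + k)"
      by (simp add: w_def z scale_right_diff_distrib ac_simps)
    also have "\<dots> = 0" by (simp add: Ssuc)
    finally have w0: "(x ^ k) *s w = 0" by (rule k)
    have "x *s Q (Suc i) k = Q i k + (x ^ k) *s d (i + k) - d i"
      using Q1[of i k] Q2[of i k] by (simp add: algebra_simps)
    then have "x *s H (Suc i) - H i = (x ^ k) *s w + d i"
      by (simp add: H_def w_def scale_right_diff_distrib ac_simps)
    then show ?thesis using w0 by simp
  qed
  define h where "h = (\<lambda>i. H (Suc i))"
  have "koszul_d scale x h = d"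
  proof
    fix i show "koszul_d scale x h i = d i"
      using main[of i] H0 by (cases i) (simp_all add: koszul_d_def h_def)
  qed
  then show ?thesis unfolding Bd_def d_def by (metis rangeI)
qed

end

theorem lemma4p2:
  fixes sc :: "'r::comm_ring_1 \<Rightarrow> 'm::ab_group_add \<Rightarrow> 'm" and x :: 'r
  assumes "module sc"
  shows
    \<comment> \<open>(a) the map Phi induces an R-linear epimorphism M[[U]]/(x-U)M[[U]] -> completion\<close>
    "(\<forall>f. Phi sc x f \<in> compl_seqs sc x)
     \<and> (\<forall>f g. Phi sc x (\<lambda>i. f i + g i) = (\<lambda>n. Phi sc x f n + Phi sc x g n))
     \<and> (\<forall>r f. Phi sc x (\<lambda>i. sc r (f i)) = (\<lambda>n. sc r (Phi sc x f n)))
     \<and> (\<forall>f g. (\<lambda>i. f i - g i) \<in> Bd sc x \<longrightarrow> compl_eq sc x (Phi sc x f) (Phi sc x g))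
     \<and> (\<forall>c \<in> compl_seqs sc x. \<exists>f. compl_eq sc x (Phi sc x f) c)
     \<comment> \<open>(b) H_1 is isomorphic to ker(Hom_R(R_x,M) -> M)\<close>
     \<and> (\<exists>\<Psi>. bij_betw \<Psi> (H1 sc x) (KerEv sc x)
          \<and> (\<forall>f\<in>H1 sc x. \<forall>g\<in>H1 sc x. \<Psi> (\<lambda>i. f i + g i) = (\<lambda>P. \<Psi> f P + \<Psi> g P))
          \<and> (\<forall>r. \<forall>f\<in>H1 sc x. \<Psi> (\<lambda>i. sc r (f i)) = (\<lambda>P. sc r (\<Psi> f P))))
     \<comment> \<open>(c) bounded torsion: H_1 = 0 and the induced map is injective, hence an isomorphism\<close>
     \<and> (bounded_torsion sc x \<longrightarrow>
          H1 sc x = {\<lambda>_. 0}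
          \<and> (\<forall>f g. compl_eq sc x (Phi sc x f) (Phi sc x g) \<longrightarrow> (\<lambda>i. f i - g i) \<in> Bd sc x))"
proof -
  interpret module sc by (rule assms)
  have b: "bij_betw (Psi x) (H1 sc x) (KerEv sc x)"
    unfolding bij_betw_def using Psi_inj Psi_Hom Psi_surj by blast
  have ex: "\<exists>\<Psi>. bij_betw \<Psi> (H1 sc x) (KerEv sc x)
          \<and> (\<forall>f\<in>H1 sc x. \<forall>g\<in>H1 sc x. \<Psi> (\<lambda>i. f i + g i) = (\<lambda>P. \<Psi> f P + \<Psi> g P))
          \<and> (\<forall>r. \<forall>f\<in>H1 sc x. \<Psi> (\<lambda>i. sc r (f i)) = (\<lambda>P. sc r (\<Psi> f P)))"
    by (rule exI[of _ "Psi x"]) (simp add: b Psi_add Psi_scale)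
  show ?thesis
    using Phi_compl Phi_add Phi_scale Phi_Bd Phi_surj ex bt_H1 bt_inj
    by auto
qed

end
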